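(* Let $k\geq 2$ be an integer. For integers $n\ge 0$ and $t\ge 0$ let $\mathrm{IB}_k(n,t)$ be the number of length-$n$ words over $\Sigma_k$ whose largest BP-factorization has width $t$. Then $\mathrm{IB}_k(0,0)=1$, and for every integer $n\geq 1$ we have $\mathrm{IB}_k(2n,2)=u_n$ and $\mathrm{IB}_k(n,1)=u_n$. Moreover, for all integers $n\geq 0$ and $t\geq 3$, \[ \mathrm{IB}_k(n,t)=\begin{cases} \sum_{i=1}^{(n-t)/2+1} u_{i}\, \mathrm{IB}_k(n-2i, t-2), & \text{if $n$, $t$ are both even;}\\ \sum_{i=1}^{(n-t+1)/2} u_{2i}\, \mathrm{IB}_k(n-2i,t-1), & \text{if $n$ is even and $t$ is odd;}\\ 0, & \text{if $n$ is odd and $t$ is even;}\\ \sum_{i=1}^{(n-t)/2+1}u_{2i-1}\,\mathrm{IB}_k(n-2i+1,t-1), & \text{if $n$, $t$ are both odd,} \end{cases} \] where a sum whose upper limit is less than $1$ is zero.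
   Context: $\Sigma_k=\{0,1,\ldots,k-1\}$. A border of a word $w$ is a non-empty word that is both a proper prefix and a proper suffix of $w$; $w$ is unbordered if it has no border (the empty word counts as unbordered). $u_n$ denotes the number of unbordered words of length $n$ over $\Sigma_k$; it satisfies $u_0=1$, $u_n=ku_{n-1}-u_{n/2}$ for even $n>0$, and $u_n=ku_{n-1}$ for odd $n$. A block palindrome factorization (BP-factorization) of a word $w$ is a factorization $w=w_m\cdots w_1w_0w_1\cdots w_m$ with $m\ge 0$, $w_0$ a possibly empty word and $w_1,\dots,w_m$ non-empty words. Its width is $2m+1$ if $w_0$ is non-empty and $2m$ if $w_0$ is empty (i.e., the number of non-empty blocks). A largest BP-factorization of $w$ is a BP-factorization of $w$ of maximum width; the width of the largest BP-factorization of $w$ is this maximum. *)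

theory Defs
  imports "HOL-Library.Sublist"
begin

text \<open>Words over the alphabet Sigma_k = {0,...,k-1} are lists of naturals with entries below k.\<close>

definition words :: "nat \<Rightarrow> nat \<Rightarrow> nat list set" where
  "words k n = {w. length w = n \<and> set w \<subseteq> {..<k}}"

definition is_border :: "'a list \<Rightarrow> 'a list \<Rightarrow> bool" where
  "is_border v w \<longleftrightarrow> v \<noteq> [] \<and> strict_prefix v w \<and> strict_suffix v w"

definition unbordered :: "'a list \<Rightarrow> bool" where
  "unbordered w \<longleftrightarrow> \<not> (\<exists>v. is_border v w)"

definition u :: "nat \<Rightarrow> nat \<Rightarrow> nat" where
  "u k n = card {w \<in> words k n. unbordered w}"

text \<open>A BP-factorization w = w_m ... w_1 w_0 w_1 ... w_m is encoded by the list
  ws = [w_1, ..., w_m] of non-empty blocks and the (possibly empty) centre w0.\<close>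
definition bp_fact :: "'a list \<Rightarrow> 'a list list \<Rightarrow> 'a list \<Rightarrow> bool" where
  "bp_fact w ws w0 \<longleftrightarrow> w = concat (rev ws) @ w0 @ concat ws \<and> (\<forall>b\<in>set ws. b \<noteq> [])"

definition bp_width :: "'a list list \<Rightarrow> 'a list \<Rightarrow> nat" where
  "bp_width ws w0 = 2 * length ws + (if w0 \<noteq> [] then 1 else 0)"

definition largest_bp_width :: "'a list \<Rightarrow> nat" where
  "largest_bp_width w = Max {bp_width ws w0 | ws w0. bp_fact w ws w0}"

definition IB :: "nat \<Rightarrow> nat \<Rightarrow> nat \<Rightarrow> nat" where
  "IB k n t = card {w \<in> words k n. largest_bp_width w = t}"

end

theory Submission
  imports Defs
begin

lemma pre_helper: assumes "xs @ ys = zs @ ts" "length zs \<le> length xs"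
  shows "\<exists>us. xs = zs @ us \<and> ts = us @ ys"
proof -
  have "take (length zs) (xs @ ys) = zs" "drop (length zs) (xs @ ys) = ts"
    by (simp_all add: assms(1))
  hence "take (length zs) xs = zs" "drop (length zs) xs @ ys = ts" using assms(2) by simp_all
  thus ?thesis by (metis append_take_drop_id)
qed

lemma suf_helper: assumes "xs @ ys = zs @ ts" "length ts \<le> length ys"
  shows "\<exists>us. ys = us @ ts \<and> zs = xs @ us"
proof -
  have "rev ys @ rev xs = rev ts @ rev zs" using arg_cong[OF assms(1), of rev] by simp
  then obtain us where "rev ys = rev ts @ us" "rev zs = us @ rev xs"
    using pre_helper[of "rev ys" "rev xs" "rev ts" "rev zs"] assms(2) by auto
  hence "ys = rev us @ ts" "zs = xs @ rev us" by (metis rev_append rev_rev_ident)+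
  thus ?thesis by blast
qed

lemma border_app: "x \<noteq> [] \<Longrightarrow> is_border x (x @ y @ x)"
  unfolding is_border_def strict_prefix_def strict_suffix_def
  by (auto simp: prefix_def suffix_def)

lemma border_iff: "is_border v w \<longleftrightarrow> v \<noteq> [] \<and> length v < length w \<and> (\<exists>r. w = v @ r) \<and> (\<exists>s. w = s @ v)"
  unfolding is_border_def strict_prefix_def strict_suffix_def prefix_def suffix_def
  by auto

lemma overlap_bordered:
  assumes "v @ p = s @ v" "p \<noteq> []" "length p < length v"
  shows "\<not> unbordered v"
proof -
  have ls: "length s = length p" using arg_cong[OF assms(1), of length] by simp
  have "take (length v) (v @ p) = v" by simp
  hence "take (length v) (s @ v) = v" using assms(1) by simp
  hence v: "v = s @ take (length v - length p) v" using ls assms(3) by simp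
  define d where "d = take (length v - length p) v"
  have "is_border d v"
    unfolding border_iff
  proof (intro conjI)
    show "d \<noteq> []" using assms(3) by (auto simp add: d_def take_eq_Nil)
    have "length p > 0" using assms(2) by simp
    moreover have "length d = length v - length p" using assms(3) by (simp add: d_def)
    ultimately show "length d < length v" using assms(3) by linarith
    show "\<exists>r. v = d @ r" unfolding d_def by (metis append_take_drop_id)
    show "\<exists>s. v = s @ d" using v d_def by blast
  qed
  thus ?thesis unfolding unbordered_def by blast
qed

lemma border_trans: "is_border a b \<Longrightarrow> is_border b c \<Longrightarrow> is_border a c"
  unfolding border_iff by (metis append.assoc order.strict_trans)

lemma border_decomp:
  "is_border v w \<Longrightarrow> \<exists>x y. x \<noteq> [] \<and> unbordered x \<and> w = x @ y @ x"
proof (induction "length v" arbitrary: v rule: less_induct)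
  case less
  show ?case
  proof (cases "unbordered v")
    case False
    then obtain v' where "is_border v' v" unfolding unbordered_def by blast
    moreover have "length v' < length v" using calculation unfolding border_iff by simp
    ultimately show ?thesis using less border_trans by blast
  next
    case True
    from less(2) obtain r s where v: "v \<noteq> []" "length v < length w" "w = v @ r" "w = s @ v"
      unfolding border_iff by blast
    have "r \<noteq> []" using v by auto
    have "\<not> length r < length v"
      using overlap_bordered[of v r s] True v by auto
    then obtain y where "r = y @ v" using suf_helper[of v r s v] v by auto
    thus ?thesis using v True by blast
  qed
qed


lemma len_concat_ge: "\<forall>b\<in>set ws. b \<noteq> [] \<Longrightarrow> length ws \<le> length (concat ws)"
proof (induction ws)
  case (Cons a ws)
  hence "length a \<ge> 1" by (auto simp: Suc_le_eq)
  thus ?case using Cons by auto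
qed simp

lemma bp_len: "bp_fact w ws w0 \<Longrightarrow> bp_width ws w0 \<le> length w"
proof -
  assume a: "bp_fact w ws w0"
  hence "length ws \<le> length (concat ws)" using len_concat_ge unfolding bp_fact_def by blast
  moreover have "length w = 2 * length (concat ws) + length w0"
    using a unfolding bp_fact_def by (simp add: length_concat sum_list_rev rev_map[symmetric])
  moreover have "w0 \<noteq> [] \<Longrightarrow> length w0 \<ge> 1" by (cases w0) auto
  ultimately show ?thesis unfolding bp_width_def by auto
qed

lemma bp_set_finite: "finite {bp_width ws w0 | ws w0. bp_fact w ws w0}"
  by (rule finite_subset[of _ "{..length w}"]) (auto dest: bp_len)

lemma bp_triv: "bp_fact w [] w" by (simp add: bp_fact_def)

lemma largest_ge: "bp_fact w ws w0 \<Longrightarrow> bp_width ws w0 \<le> largest_bp_width w"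
  unfolding largest_bp_width_def by (rule Max_ge[OF bp_set_finite]) blast

lemma largest_ex: "\<exists>ws w0. bp_fact w ws w0 \<and> bp_width ws w0 = largest_bp_width w"
proof -
  have "largest_bp_width w \<in> {bp_width ws w0 | ws w0. bp_fact w ws w0}"
    unfolding largest_bp_width_def using bp_set_finite by (rule Max_in) (use bp_triv in blast)
  then obtain ws w0 where "largest_bp_width w = bp_width ws w0" "bp_fact w ws w0" by auto
  thus ?thesis by metis
qed

lemma largest_le_len: "largest_bp_width w \<le> length w"
  using largest_ex bp_len by metis

lemma largest_pos: "w \<noteq> [] \<Longrightarrow> largest_bp_width w \<ge> 1"
  using largest_ge[OF bp_triv, of w] by (simp add: bp_width_def)

lemma largest_nil: "largest_bp_width [] = 0"
  using largest_le_len[of "[]"] by simp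

lemma bp_snoc: "bp_fact w (ws @ [x]) w0 \<longleftrightarrow> x \<noteq> [] \<and> (\<exists>y. w = x @ y @ x \<and> bp_fact y ws w0)"
  unfolding bp_fact_def by auto

lemma width_snoc: "bp_width (ws @ [x]) w0 = bp_width ws w0 + 2"
  unfolding bp_width_def by simp

lemma largest_even_len: "even (largest_bp_width w) \<Longrightarrow> even (length w)"
proof -
  assume e: "even (largest_bp_width w)"
  obtain ws w0 where f: "bp_fact w ws w0" "bp_width ws w0 = largest_bp_width w"
    using largest_ex by blast
  have "w0 = []"
  proof (rule ccontr)
    assume "w0 \<noteq> []"
    hence "largest_bp_width w = 2 * length ws + 1" using f by (simp add: bp_width_def)
    thus False using e by simp
  qed
  hence "length w = 2 * length (concat ws)"
    using f unfolding bp_fact_def by (simp add: length_concat sum_list_rev rev_map[symmetric])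
  thus ?thesis by simp
qed

lemma largest_unb: assumes "w \<noteq> []" "unbordered w" shows "largest_bp_width w = 1"
proof -
  obtain ws w0 where f: "bp_fact w ws w0" "bp_width ws w0 = largest_bp_width w"
    using largest_ex by blast
  show ?thesis
  proof (cases ws rule: rev_exhaust)
    case Nil
    thus ?thesis using f assms(1) by (simp add: bp_fact_def bp_width_def)
  next
    case (snoc ws' x)
    then obtain y where "x \<noteq> []" "w = x @ y @ x" using f bp_snoc by blast
    hence "is_border x w" using border_app by blast
    thus ?thesis using assms(2) unfolding unbordered_def by blast
  qed
qed

lemma largest_peel: assumes "b \<noteq> []" "unbordered b"
  shows "largest_bp_width (b @ m @ b) = largest_bp_width m + 2"
proof (rule antisym)
  obtain ws w0 where f: "bp_fact m ws w0" "bp_width ws w0 = largest_bp_width m"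
    using largest_ex by blast
  hence "bp_fact (b @ m @ b) (ws @ [b]) w0" using bp_snoc assms(1) by blast
  from largest_ge[OF this] show "largest_bp_width m + 2 \<le> largest_bp_width (b @ m @ b)"
    using f by (simp add: width_snoc)
next
  obtain ws w0 where f: "bp_fact (b @ m @ b) ws w0" "bp_width ws w0 = largest_bp_width (b @ m @ b)"
    using largest_ex by blast
  show "largest_bp_width (b @ m @ b) \<le> largest_bp_width m + 2"
  proof (cases ws rule: rev_exhaust)
    case Nil
    thus ?thesis using f by (simp add: bp_width_def split: if_splits)
  next
    case (snoc ws' x)
    then obtain y where xy: "x \<noteq> []" "b @ m @ b = x @ y @ x" "bp_fact y ws' w0"
      using f bp_snoc by blast
    have wid: "bp_width ws w0 = bp_width ws' w0 + 2" using snoc width_snoc by simp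
    consider "length x < length b" | "length x = length b" | "length b < length x" by linarith
    thus ?thesis
    proof cases
      case 1
      obtain r where r: "b = x @ r" using pre_helper[of b "m @ b" x "y @ x"] xy 1 by auto
      obtain s where s: "b = s @ x" using suf_helper[of "b @ m" b "x @ y" x] xy 1 by auto
      have "is_border x b" unfolding border_iff using r s 1 xy by blast
      thus ?thesis using assms(2) unfolding unbordered_def by blast
    next
      case 2
      obtain r where r: "b = x @ r" using pre_helper[of b "m @ b" x "y @ x"] xy 2 by auto
      hence "x = b" using 2 by simp
      hence "y = m" using xy by simp
      thus ?thesis using largest_ge[OF xy(3)] f wid by simp
    next
      case 3
      obtain v where v: "x = b @ v" "m @ b = v @ y @ x" using pre_helper[of x "y @ x" b "m @ b"] xy 3 by auto
      obtain v' where v': "x = v' @ b" "b @ m = x @ y @ v'"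
        using suf_helper[of "x @ y" x "b @ m" b] xy 3 by auto
      have "v \<noteq> []" using v 3 by auto
      moreover have "b @ v = v' @ b" using v v' by simp
      ultimately have "\<not> length v < length b" using overlap_bordered[of b v v'] assms(2) by blast
      then obtain z where z: "v = z @ b" using suf_helper[of b v v' b] \<open>b @ v = v' @ b\<close> by auto
      have xz: "x = b @ z @ b" using v z by simp
      hence "b @ m @ b = b @ (z @ b @ y @ b @ z) @ b" using xy by simp
      hence m: "m = z @ (b @ y @ b) @ z" by simp
      have f1: "bp_fact (b @ y @ b) (ws' @ [b]) w0" using bp_snoc assms(1) xy(3) by blast
      have "bp_width ws' w0 + 2 \<le> largest_bp_width m"
      proof (cases "z = []")
        case True
        thus ?thesis using m largest_ge[OF f1] by (simp add: width_snoc)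
      next
        case False
        have "bp_fact m ((ws' @ [b]) @ [z]) w0" using bp_snoc False f1 m by blast
        from largest_ge[OF this] show ?thesis by (simp add: bp_width_def)
      qed
      thus ?thesis using f wid by simp
    qed
  qed
qed

lemma peel_unique:
  assumes "b1 @ m1 @ b1 = b2 @ m2 @ b2" "b1 \<noteq> []" "b2 \<noteq> []" "unbordered b1" "unbordered b2"
  shows "b1 = b2 \<and> m1 = m2"
proof -
  have key: "length c1 \<ge> length c2" if h: "c1 @ n1 @ c1 = c2 @ n2 @ c2" "c1 \<noteq> []" "unbordered c2"
    for c1 c2 n1 n2 :: "'a list"
  proof (rule ccontr)
    assume l: "\<not> length c1 \<ge> length c2"
    obtain r where r: "c2 = c1 @ r" using pre_helper[of c2 "n2 @ c2" c1 "n1 @ c1"] h l by auto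
    obtain s where s: "c2 = s @ c1" using suf_helper[of "c2 @ n2" c2 "c1 @ n1" c1] h l by auto
    have "c1 \<noteq> [] \<and> length c1 < length c2 \<and> (\<exists>r. c2 = c1 @ r) \<and> (\<exists>s. c2 = s @ c1)"
    proof (intro conjI)
      show "length c1 < length c2" using l by simp
    qed (use r s h(2) in blast)+
    hence "is_border c1 c2" unfolding border_iff .
    thus False using h(3) unfolding unbordered_def by blast
  qed
  have "length b1 = length b2" using key[of b1 m1 b2 m2] key[of b2 m2 b1 m1] assms by force
  moreover obtain r where "b1 = b2 @ r" using pre_helper[of b1 "m1 @ b1" b2 "m2 @ b2"] assms(1) calculation by auto
  ultimately have "b1 = b2" by simp
  thus ?thesis using assms(1) by simp
qed


lemma words_finite: "finite (words k n)"
proof -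
  have "words k n = {xs. set xs \<subseteq> {..<k} \<and> length xs = n}" unfolding words_def by auto
  thus ?thesis using finite_lists_length_eq[of "{..<k}" n] by simp
qed

lemma bordered_decomp: "w \<noteq> [] \<Longrightarrow> \<not> unbordered w \<Longrightarrow> \<exists>x y. x \<noteq> [] \<and> unbordered x \<and> w = x @ y @ x"
proof -
  assume "\<not> unbordered w"
  then obtain v where "is_border v w" unfolding unbordered_def by blast
  thus ?thesis by (rule border_decomp)
qed

lemma IB_rec:
  assumes "t \<ge> 2"
  shows "IB k n t = (\<Sum>i\<in>{1..n div 2}. u k i * IB k (n - 2*i) (t - 2))"
proof -
  define U where "U i = {w \<in> words k i. unbordered w}" for i
  define S where "S n t = {w \<in> words k n. largest_bp_width w = t}" for n t
  define F where "F i = (\<lambda>(b,m). b @ m @ b) ` (U i \<times> S (n - 2*i) (t-2))" for i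
  have eq: "S n t = (\<Union>i\<in>{1..n div 2}. F i)"
  proof
    show "S n t \<subseteq> (\<Union>i\<in>{1..n div 2}. F i)"
    proof
      fix w assume "w \<in> S n t"
      hence w: "length w = n" "set w \<subseteq> {..<k}" "largest_bp_width w = t"
        unfolding S_def words_def by auto
      have "w \<noteq> []"
      proof
        assume "w = []"
        hence "t = 0" using w(3) largest_nil[where 'a=nat] by simp
        thus False using assms by simp
      qed
      moreover have "\<not> unbordered w"
      proof
        assume "unbordered w"
        hence "largest_bp_width w = 1" using largest_unb \<open>w \<noteq> []\<close> by blast
        thus False using w(3) assms by simp
      qed
      ultimately obtain b y where hb: "b \<noteq> []" "unbordered b" "w = b @ y @ b"
        using bordered_decomp by blast
      define i where "i = length b"
      have i: "1 \<le> i" "i \<le> n div 2" using hb w(1) unfolding i_def by (auto simp: Suc_le_eq)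
      have "b \<in> U i" using hb w(2) unfolding U_def words_def i_def by auto
      moreover have "y \<in> S (n - 2*i) (t-2)"
        using hb w largest_peel[OF hb(1,2), of y] unfolding S_def words_def i_def by auto
      ultimately have "(b, y) \<in> U i \<times> S (n - 2*i) (t-2)" by simp
      hence "(\<lambda>(b,m). b @ m @ b) (b, y) \<in> F i" unfolding F_def by (rule imageI)
      hence "w \<in> F i" using hb(3) by simp
      thus "w \<in> (\<Union>i\<in>{1..n div 2}. F i)" using i by auto
    qed
  next
    show "(\<Union>i\<in>{1..n div 2}. F i) \<subseteq> S n t"
    proof
      fix w assume "w \<in> (\<Union>i\<in>{1..n div 2}. F i)"
      then obtain i b m where i: "1 \<le> i" "i \<le> n div 2" and bm: "b \<in> U i" "m \<in> S (n - 2*i) (t-2)"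
        and w: "w = b @ m @ b" unfolding F_def by auto
      have b: "length b = i" "set b \<subseteq> {..<k}" "unbordered b" using bm(1) unfolding U_def words_def by auto
      have m: "length m = n - 2*i" "set m \<subseteq> {..<k}" "largest_bp_width m = t - 2"
        using bm(2) unfolding S_def words_def by auto
      have "b \<noteq> []" using b(1) i(1) by auto
      hence "largest_bp_width w = t" using largest_peel[OF _ b(3)] w m(3) assms by simp
      moreover have "length w = n" using w b(1) m(1) i(2) by simp
      moreover have "set w \<subseteq> {..<k}" using w b(2) m(2) by auto
      ultimately show "w \<in> S n t" unfolding S_def words_def by auto
    qed
  qed
  have inj: "inj_on (\<lambda>(b,m). b @ m @ b) (U i \<times> S (n - 2*i) (t-2))" if "i \<ge> 1" for i
  proof (rule inj_onI)
    fix p q assume h: "p \<in> U i \<times> S (n - 2 * i) (t - 2)" "q \<in> U i \<times> S (n - 2 * i) (t - 2)"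
      "(\<lambda>(b,m). b @ m @ b) p = (\<lambda>(b,m). b @ m @ b) q"
    obtain b m where p: "p = (b, m)" by fastforce
    obtain b' m' where q: "q = (b', m')" by fastforce
    have "b \<noteq> []" "b' \<noteq> []" "unbordered b" "unbordered b'" using h(1,2) that p q unfolding U_def words_def by auto
    moreover have "b @ m @ b = b' @ m' @ b'" using h(3) p q by simp
    ultimately have "b = b' \<and> m = m'" using peel_unique by blast
    thus "p = q" using p q by simp
  qed
  have finF: "finite (F i)" for i
    unfolding F_def U_def S_def by (intro finite_imageI finite_cartesian_product) (use words_finite in auto)
  have cardF: "card (F i) = u k i * IB k (n - 2*i) (t - 2)" if "i \<ge> 1" for i
    unfolding F_def using card_image[OF inj[OF that]] card_cartesian_product
    unfolding u_def IB_def U_def S_def by simp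
  have disj: "\<forall>i\<in>{1..n div 2}. \<forall>j\<in>{1..n div 2}. i \<noteq> j \<longrightarrow> F i \<inter> F j = {}"
  proof (intro ballI impI)
    fix i j assume ij: "i \<in> {1..n div 2}" "j \<in> {1..n div 2}" "i \<noteq> j"
    show "F i \<inter> F j = {}"
    proof (rule ccontr)
      assume "F i \<inter> F j \<noteq> {}"
      then obtain b m b' m' where h: "b \<in> U i" "b' \<in> U j" "b @ m @ b = b' @ m' @ b'"
        unfolding F_def by auto
      have "length b = i" "length b' = j" "unbordered b" "unbordered b'" using h(1,2) unfolding U_def words_def by auto
      moreover have "b \<noteq> []" "b' \<noteq> []" using calculation ij by auto
      ultimately show False using peel_unique h(3) ij(3) by blast
    qed
  qed
  have "IB k n t = card (S n t)" unfolding IB_def S_def by simp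
  also have "\<dots> = (\<Sum>i\<in>{1..n div 2}. card (F i))" unfolding eq
    by (rule card_UN_disjoint) (use finF disj in auto)
  also have "\<dots> = (\<Sum>i\<in>{1..n div 2}. u k i * IB k (n - 2*i) (t - 2))"
    by (rule sum.cong) (auto simp: cardF)
  finally show ?thesis .
qed

lemma IB_0: "IB k n 0 = (if n = 0 then 1 else 0)"
proof (cases "n = 0")
  case True
  have "{w \<in> words k 0. largest_bp_width w = 0} = {[]}" unfolding words_def
    using largest_nil[where 'a=nat] by auto
  thus ?thesis using True unfolding IB_def by simp
next
  case False
  have "\<forall>w\<in>words k n. largest_bp_width w \<noteq> 0"
  proof
    fix w assume "w \<in> words k n"
    hence "w \<noteq> []" using False unfolding words_def by auto
    from largest_pos[OF this] show "largest_bp_width w \<noteq> 0" by simp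
  qed
  hence "{w \<in> words k n. largest_bp_width w = 0} = {}" by blast
  thus ?thesis using False unfolding IB_def by (metis card.empty)
qed

lemma IB_1: "n \<ge> 1 \<Longrightarrow> IB k n 1 = u k n"
proof -
  assume n: "n \<ge> 1"
  have "{w \<in> words k n. largest_bp_width w = 1} = {w \<in> words k n. unbordered w}"
  proof (intro Collect_cong conj_cong refl)
    fix w assume "w \<in> words k n"
    hence ne: "w \<noteq> []" using n unfolding words_def by auto
    show "(largest_bp_width w = 1) = unbordered w"
    proof
      assume l: "largest_bp_width w = 1"
      show "unbordered w"
      proof (rule ccontr)
        assume "\<not> unbordered w"
        then obtain b y where "b \<noteq> []" "unbordered b" "w = b @ y @ b" using bordered_decomp ne by blast
        hence "largest_bp_width w = largest_bp_width y + 2" using largest_peel by blast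
        thus False using l by simp
      qed
    qed (use largest_unb ne in blast)
  qed
  thus ?thesis unfolding IB_def u_def by simp
qed

lemma IB_small: "n < t \<Longrightarrow> IB k n t = 0"
proof -
  assume "n < t"
  have "\<forall>w\<in>words k n. largest_bp_width w \<noteq> t"
  proof
    fix w assume "w \<in> words k n"
    hence "length w = n" by (simp add: words_def)
    thus "largest_bp_width w \<noteq> t" using largest_le_len[of w] \<open>n < t\<close> by auto
  qed
  hence "{w \<in> words k n. largest_bp_width w = t} = {}" by blast
  thus ?thesis unfolding IB_def by (metis card.empty)
qed

lemma IB_parity: "odd n \<Longrightarrow> even t \<Longrightarrow> IB k n t = 0"
proof -
  assume "odd n" "even t"
  have "\<forall>w\<in>words k n. largest_bp_width w \<noteq> t"
  proof
    fix w assume "w \<in> words k n"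
    hence "length w = n" by (simp add: words_def)
    thus "largest_bp_width w \<noteq> t" using largest_even_len[of w] \<open>odd n\<close> \<open>even t\<close> by auto
  qed
  hence "{w \<in> words k n. largest_bp_width w = t} = {}" by blast
  thus ?thesis unfolding IB_def by (metis card.empty)
qed


lemma range_lemma:
  fixes M N :: nat
  assumes "\<And>i. M < i \<Longrightarrow> i \<le> N \<Longrightarrow> f i = 0" "\<And>i. N < i \<Longrightarrow> i \<le> M \<Longrightarrow> f i = 0"
  shows "sum f {1..N} = (sum f {1..M} :: nat)"
proof (cases "M \<le> N")
  case True
  show ?thesis by (rule sum.mono_neutral_right) (use True assms(1) in auto)
next
  case False
  show ?thesis by (rule sum.mono_neutral_left) (use False assms(2) in auto)
qed

lemma par_shift: "2*i + c \<le> (n::nat) \<Longrightarrow> even (n - c) = even (n - 2*i - c)"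
  by presburger

lemma IB_odd:
  "IB k n (2*s+1) = (\<Sum>c\<in>{1..n}. if even (n - c) then u k c * IB k (n-c) (2*s) else 0)"
proof (induction s arbitrary: n)
  case 0
  show ?case
  proof (cases "n = 0")
    case True
    thus ?thesis using IB_small[of 0 1 k] by simp
  next
    case False
    have "(\<Sum>c\<in>{1..n}. if even (n - c) then u k c * IB k (n-c) (2*0) else 0)
        = (\<Sum>c\<in>{1..n}. if c = n then u k c else 0)"
      by (rule sum.cong) (auto simp: IB_0)
    also have "\<dots> = u k n" using False by (simp add: sum.delta)
    finally show ?thesis using IB_1[of n k] False by simp
  qed
next
  case (Suc s)
  define g where "g i c = (if 2*i + c \<le> n \<and> even (n - c) then u k i * u k c * IB k (n-2*i-c) (2*s) else 0)" for i c
  have "IB k n (2 * Suc s + 1) = (\<Sum>i\<in>{1..n div 2}. u k i * IB k (n - 2*i) (2*s+1))"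
    using IB_rec[of "2 * Suc s + 1" k n] by simp
  also have "\<dots> = (\<Sum>i\<in>{1..n div 2}. \<Sum>c\<in>{1..n}. g i c)"
  proof (rule sum.cong[OF refl])
    fix i assume i: "i \<in> {1..n div 2}"
    have "u k i * IB k (n - 2*i) (2*s+1) =
        (\<Sum>c\<in>{1..n - 2*i}. u k i * (if even (n - 2*i - c) then u k c * IB k (n - 2*i - c) (2*s) else 0))"
      by (subst Suc.IH) (rule sum_distrib_left)
    also have "\<dots> = (\<Sum>c\<in>{1..n - 2*i}. g i c)"
    proof (rule sum.cong[OF refl])
      fix c assume c: "c \<in> {1..n - 2*i}"
      hence le: "2*i + c \<le> n" using i by auto
      show "u k i * (if even (n - 2*i - c) then u k c * IB k (n - 2*i - c) (2*s) else 0) = g i c"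
        unfolding g_def using par_shift[OF le] le by simp
    qed
    also have "\<dots> = (\<Sum>c\<in>{1..n}. g i c)"
      by (rule range_lemma) (auto simp: g_def)
    finally show "u k i * IB k (n - 2*i) (2*s+1) = (\<Sum>c\<in>{1..n}. g i c)" .
  qed
  also have "\<dots> = (\<Sum>i\<in>{1..n}. \<Sum>c\<in>{1..n}. g i c)"
    by (rule range_lemma) (auto simp: g_def intro!: sum.neutral)
  also have "\<dots> = (\<Sum>c\<in>{1..n}. \<Sum>i\<in>{1..n}. g i c)"
    by (rule sum.swap)
  also have "\<dots> = (\<Sum>c\<in>{1..n}. if even (n - c) then u k c * IB k (n-c) (2 * Suc s) else 0)"
  proof (rule sum.cong[OF refl])
    fix c assume c: "c \<in> {1..n}"
    show "(\<Sum>i\<in>{1..n}. g i c) = (if even (n - c) then u k c * IB k (n-c) (2 * Suc s) else 0)"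
    proof (cases "even (n - c)")
      case False
      thus ?thesis by (auto simp: g_def intro!: sum.neutral)
    next
      case True
      have "u k c * IB k (n-c) (2 * Suc s) = (\<Sum>i\<in>{1..(n-c) div 2}. u k c * (u k i * IB k (n - c - 2*i) (2*s)))"
        using IB_rec[of "2 * Suc s" k "n - c"] by (simp add: sum_distrib_left)
      also have "\<dots> = (\<Sum>i\<in>{1..(n-c) div 2}. g i c)"
      proof (rule sum.cong[OF refl])
        fix i assume i: "i \<in> {1..(n-c) div 2}"
        hence "2*i + c \<le> n" by auto
        moreover have "n - c - 2*i = n - 2*i - c" by simp
        ultimately show "u k c * (u k i * IB k (n - c - 2*i) (2*s)) = g i c"
          unfolding g_def using True by (simp add: mult_ac)
      qed
      also have "\<dots> = (\<Sum>i\<in>{1..n}. g i c)"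
        by (rule range_lemma[symmetric]) (auto simp: g_def)
      finally show ?thesis using True by simp
    qed
  qed
  finally show ?case .
qed


lemma a1: "even (n::nat) \<Longrightarrow> even t \<Longrightarrow> t \<ge> 3 \<Longrightarrow> nat ((int n - int t) div 2 + 1) < i \<Longrightarrow> n - 2*i < t - 2"
proof -
  assume h: "even n" "even t" "t \<ge> 3" "nat ((int n - int t) div 2 + 1) < i"
  have "(int n - int t) div 2 + 1 < int i" using h(4) by linarith
  thus ?thesis using h(1-3) by presburger
qed

lemma a2: "t \<ge> 3 \<Longrightarrow> i \<le> nat ((int n - int t) div 2 + 1) \<Longrightarrow> i \<le> (n::nat) div 2"
proof -
  assume h: "t \<ge> 3" "i \<le> nat ((int n - int t) div 2 + 1)"
  hence "int i \<le> (int n - int t) div 2 + 1 \<or> i = 0" by linarith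
  thus ?thesis using h(1) by presburger
qed

lemma a3: "even (n::nat) \<Longrightarrow> odd t \<Longrightarrow> t \<ge> 3 \<Longrightarrow> nat ((int n - int t + 1) div 2) < i \<Longrightarrow> n - 2*i < t - 1"
proof -
  assume h: "even n" "odd t" "t \<ge> 3" "nat ((int n - int t + 1) div 2) < i"
  have "(int n - int t + 1) div 2 < int i" using h(4) by linarith
  thus ?thesis using h(1-3) by presburger
qed

lemma a4: "t \<ge> 3 \<Longrightarrow> i \<le> nat ((int n - int t + 1) div 2) \<Longrightarrow> i \<le> (n::nat) div 2"
proof -
  assume h: "t \<ge> 3" "i \<le> nat ((int n - int t + 1) div 2)"
  hence "int i \<le> (int n - int t + 1) div 2 \<or> i = 0" by linarith
  thus ?thesis using h(1) by presburger
qed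

lemma a5: "odd (n::nat) \<Longrightarrow> odd t \<Longrightarrow> t \<ge> 3 \<Longrightarrow> nat ((int n - int t) div 2 + 1) < i \<Longrightarrow> n - (2*i - 1) < t - 1"
proof -
  assume h: "odd n" "odd t" "t \<ge> 3" "nat ((int n - int t) div 2 + 1) < i"
  have "(int n - int t) div 2 + 1 < int i" using h(4) by linarith
  thus ?thesis using h(1-3) by presburger
qed

lemma a6: "odd (n::nat) \<Longrightarrow> t \<ge> 3 \<Longrightarrow> i \<le> nat ((int n - int t) div 2 + 1) \<Longrightarrow> 2 * i + 1 \<le> n"
proof -
  assume h: "odd n" "t \<ge> 3" "i \<le> nat ((int n - int t) div 2 + 1)"
  hence "int i \<le> (int n - int t) div 2 + 1 \<or> i = 0" by linarith
  thus ?thesis using h(1,2) by presburger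
qed

theorem theorem2:
  fixes k :: nat
  assumes "k \<ge> 2"
  shows "IB k 0 0 = 1 \<and>
    (\<forall>n\<ge>1. IB k (2*n) 2 = u k n) \<and>
    (\<forall>n\<ge>1. IB k n 1 = u k n) \<and>
    (\<forall>n t. t \<ge> 3 \<longrightarrow>
           IB k n t =
             (if even n \<and> even t then
                (\<Sum>i\<in>{1..nat ((int n - int t) div 2 + 1)}. u k i * IB k (n - 2*i) (t - 2))
              else if even n \<and> odd t then
                (\<Sum>i\<in>{1..nat ((int n - int t + 1) div 2)}. u k (2*i) * IB k (n - 2*i) (t - 1))
              else if odd n \<and> even t then 0
              else
                (\<Sum>i\<in>{1..nat ((int n - int t) div 2 + 1)}. u k (2*i - 1) * IB k (n - 2*i + 1) (t - 1))))"
proof (intro conjI allI impI)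
  show "IB k 0 0 = 1" by (simp add: IB_0)
next
  fix n :: nat assume n: "n \<ge> 1"
  have "IB k (2*n) 2 = (\<Sum>i\<in>{1..n}. u k i * IB k (2*n - 2*i) 0)"
    using IB_rec[of 2 k "2*n"] by simp
  also have "\<dots> = (\<Sum>i\<in>{1..n}. if i = n then u k i else 0)"
    by (rule sum.cong) (auto simp: IB_0)
  also have "\<dots> = u k n" using n by (simp add: sum.delta)
  finally show "IB k (2*n) 2 = u k n" .
next
  fix n :: nat assume "n \<ge> 1"
  thus "IB k n 1 = u k n" by (rule IB_1)
next
  fix n t :: nat assume t: "t \<ge> 3"
  define M where "M = nat ((int n - int t) div 2 + 1)"
  define M' where "M' = nat ((int n - int t + 1) div 2)"
  consider "even n" "even t" | "even n" "odd t" | "odd n" "even t" | "odd n" "odd t" by blast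
  thus "IB k n t = (if even n \<and> even t then
                (\<Sum>i\<in>{1..nat ((int n - int t) div 2 + 1)}. u k i * IB k (n - 2*i) (t - 2))
              else if even n \<and> odd t then
                (\<Sum>i\<in>{1..nat ((int n - int t + 1) div 2)}. u k (2*i) * IB k (n - 2*i) (t - 1))
              else if odd n \<and> even t then 0
              else
                (\<Sum>i\<in>{1..nat ((int n - int t) div 2 + 1)}. u k (2*i - 1) * IB k (n - 2*i + 1) (t - 1)))"
  proof cases
    case 1
    have "IB k n t = (\<Sum>i\<in>{1..n div 2}. u k i * IB k (n - 2*i) (t - 2))"
      using IB_rec[of t k n] t by simp
    also have "\<dots> = (\<Sum>i\<in>{1..M}. u k i * IB k (n - 2*i) (t - 2))"
    proof (rule range_lemma)
      fix i assume "M < i" "i \<le> n div 2"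
      hence "n - 2*i < t - 2" using a1[of n t i] 1 t unfolding M_def by blast
      thus "u k i * IB k (n - 2*i) (t - 2) = 0" by (simp add: IB_small)
    next
      fix i assume "n div 2 < i" "i \<le> M"
      thus "u k i * IB k (n - 2*i) (t - 2) = 0" using a2[of t i n] t unfolding M_def by simp
    qed
    finally show ?thesis using 1 unfolding M_def by simp
  next
    case 2
    obtain s where s: "t = 2*s+1" using 2 oddE by blast
    have ts: "t - 1 = 2*s" using s by simp
    have "IB k n t = (\<Sum>c\<in>{1..n}. if even (n - c) then u k c * IB k (n-c) (t - 1) else 0)"
      unfolding ts using IB_odd[of k n s] s by simp
    also have "\<dots> = (\<Sum>c\<in>{1..n}. if even c then u k c * IB k (n-c) (t - 1) else 0)"
      by (rule sum.cong[OF refl]) (use 2 in auto)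
    also have "\<dots> = (\<Sum>c\<in>{c\<in>{1..n}. even c}. u k c * IB k (n-c) (t - 1))"
      by (rule sum.inter_filter[symmetric]) simp
    also have "{c\<in>{1..n}. even c} = (\<lambda>i. 2*i) ` {1..n div 2}"
    proof (rule set_eqI, rule iffI)
      fix c assume c: "c \<in> {c\<in>{1..n}. even c}"
      then obtain i where i: "c = 2*i" by (auto elim: evenE)
      have "i \<in> {1..n div 2}" using c i by auto
      thus "c \<in> (\<lambda>i. 2*i) ` {1..n div 2}" using i by blast
    next
      fix c assume "c \<in> (\<lambda>i. 2*i) ` {1..n div 2}"
      thus "c \<in> {c\<in>{1..n}. even c}" by auto
    qed
    also have "(\<Sum>c\<in>(\<lambda>i. 2*i) ` {1..n div 2}. u k c * IB k (n-c) (t - 1))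
        = (\<Sum>i\<in>{1..n div 2}. u k (2*i) * IB k (n - 2*i) (t - 1))"
      by (subst sum.reindex) (auto simp: inj_on_def)
    also have "\<dots> = (\<Sum>i\<in>{1..M'}. u k (2*i) * IB k (n - 2*i) (t - 1))"
    proof (rule range_lemma)
      fix i assume "M' < i" "i \<le> n div 2"
      hence "n - 2*i < t - 1" using a3[of n t i] 2 t unfolding M'_def by blast
      thus "u k (2*i) * IB k (n - 2*i) (t - 1) = 0" by (simp add: IB_small)
    next
      fix i assume "n div 2 < i" "i \<le> M'"
      thus "u k (2*i) * IB k (n - 2*i) (t - 1) = 0" using a4[of t i n] t unfolding M'_def by simp
    qed
    finally show ?thesis using 2 unfolding M'_def by simp
  next
    case 3
    thus ?thesis using IB_parity by simp
  next
    case 4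
    obtain s where s: "t = 2*s+1" using 4 oddE by blast
    have ts: "t - 1 = 2*s" using s by simp
    have "IB k n t = (\<Sum>c\<in>{1..n}. if even (n - c) then u k c * IB k (n-c) (t - 1) else 0)"
      unfolding ts using IB_odd[of k n s] s by simp
    also have "\<dots> = (\<Sum>c\<in>{1..n}. if odd c then u k c * IB k (n-c) (t - 1) else 0)"
      by (rule sum.cong[OF refl]) (use 4 in auto)
    also have "\<dots> = (\<Sum>c\<in>{c\<in>{1..n}. odd c}. u k c * IB k (n-c) (t - 1))"
      by (rule sum.inter_filter[symmetric]) simp
    also have "{c\<in>{1..n}. odd c} = (\<lambda>i. 2*i - 1) ` {1..(n+1) div 2}"
    proof (rule set_eqI, rule iffI)
      fix c assume c: "c \<in> {c\<in>{1..n}. odd c}"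
      then obtain j where j: "c = 2*j + 1" by (auto elim: oddE)
      have "Suc j \<in> {1..(n+1) div 2}" using c j by auto
      moreover have "c = 2 * Suc j - 1" using j by simp
      ultimately show "c \<in> (\<lambda>i. 2*i - 1) ` {1..(n+1) div 2}" by blast
    next
      fix c assume "c \<in> (\<lambda>i. 2*i - 1) ` {1..(n+1) div 2}"
      then obtain i where "i \<in> {1..(n+1) div 2}" "c = 2*i - 1" by blast
      thus "c \<in> {c\<in>{1..n}. odd c}" by auto
    qed
    also have "(\<Sum>c\<in>(\<lambda>i. 2*i - 1) ` {1..(n+1) div 2}. u k c * IB k (n-c) (t - 1))
        = (\<Sum>i\<in>{1..(n+1) div 2}. u k (2*i - 1) * IB k (n - (2*i - 1)) (t - 1))"
      by (subst sum.reindex) (auto simp: inj_on_def)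
    also have "\<dots> = (\<Sum>i\<in>{1..M}. u k (2*i - 1) * IB k (n - (2*i - 1)) (t - 1))"
    proof (rule range_lemma)
      fix i assume "M < i" "i \<le> (n+1) div 2"
      hence "n - (2*i - 1) < t - 1" using a5[of n t i] 4 t unfolding M_def by blast
      thus "u k (2*i - 1) * IB k (n - (2*i - 1)) (t - 1) = 0" by (simp add: IB_small)
    next
      fix i assume "(n+1) div 2 < i" "i \<le> M"
      thus "u k (2*i - 1) * IB k (n - (2*i - 1)) (t - 1) = 0" using a6[of n t i] 4 t unfolding M_def by simp
    qed
    also have "\<dots> = (\<Sum>i\<in>{1..M}. u k (2*i - 1) * IB k (n - 2*i + 1) (t - 1))"
    proof (rule sum.cong[OF refl])
      fix i assume "i \<in> {1..M}"
      hence "2 * i + 1 \<le> n" "i \<ge> 1" using a6[of n t i] 4 t unfolding M_def by auto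
      hence "n - (2*i - 1) = n - 2*i + 1" by simp
      thus "u k (2*i - 1) * IB k (n - (2*i - 1)) (t - 1) = u k (2*i - 1) * IB k (n - 2*i + 1) (t - 1)" by simp
    qed
    finally show ?thesis using 4 unfolding M_def by simp
  qed
qed

end
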